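(* The following identities of formal power series hold: $$(1,1,52,q)=(1,1,6,q^9)+P_{3,1}(1,1,6,q),\qquad (8,7,8,q)=(1,1,6,q^9)+P_{3,2}(1,1,6,q),$$ $$(4,1,13,q)=(2,1,3,q^9)+P_{3,1}(2,1,3,q),\qquad (2,1,26,q)=(2,1,3,q^9)+P_{3,2}(2,1,3,q).$$
   Context: For integers $A,B,C$ with $A>0$ and $B^2-4AC<0$, $(A,B,C,q):=\sum_{(x,y)\in\mathbb Z^2}q^{Ax^2+Bxy+Cy^2}$, and $(A,B,C,q^k)$ is this series with $q\mapsto q^k$. For $m\ge1$, $0\le r<m$: $P_{m,r}\sum_{n\ge0}a(n)q^n=\sum_{n\ge0}a(mn+r)q^{mn+r}$. *)

theory Defs
  imports "HOL-Computational_Algebra.Formal_Power_Series"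
begin

definition qf_theta :: "int \<Rightarrow> int \<Rightarrow> int \<Rightarrow> int fps" where
  "qf_theta A B C = Abs_fps (\<lambda>n. int (card {(x::int, y::int). A*x^2 + B*x*y + C*y^2 = int n}))"

definition P_op :: "nat \<Rightarrow> nat \<Rightarrow> 'a::zero fps \<Rightarrow> 'a fps" where
  "P_op m r f = Abs_fps (\<lambda>n. if n mod m = r then fps_nth f n else 0)"

end

theory Submission
  imports Defs
begin

lemma qmod: "((a::int)*x^2 + b*x*y + c*y^2) mod 3 = (a*(x mod 3)^2 + b*(x mod 3)*(y mod 3) + c*(y mod 3)^2) mod 3"
proof -
  define p r q s where "p = x div 3" "r = x mod 3" "q = y div 3" "s = y mod 3"
  have x: "x = 3*p + r" and y: "y = 3*q + s" by (simp_all add: p_r_q_s_def)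
  have "a*x^2 + b*x*y + c*y^2 = (a*r^2+b*r*s+c*s^2) + 3*(a*(2*p*r+3*p^2) + b*(p*s+r*q+3*p*q) + c*(2*q*s+3*q^2))"
    unfolding x y by (simp add: power2_eq_square algebra_simps)
  then have "(a*x^2 + b*x*y + c*y^2) mod 3 = (a*r^2+b*r*s+c*s^2) mod 3"
    by (simp only: mod_mult_self2)
  then show ?thesis by (simp only: p_r_q_s_def)
qed

lemma mod3in: "(x::int) mod 3 \<in> {0,1,2}" by auto

lemma intmod: "int n mod 3 = int (n mod 3)"
  by (simp add: of_nat_mod)

lemma div3n: "(- (y * 3)) div 3 = - (y::int)"
proof -
  have "- (y * 3) = (-y) * 3" by simp
  then show ?thesis by simp
qed

lemma comp9: "fps_nth ((F::int fps) oo fps_X ^ 9) n = (if 9 dvd n then fps_nth F (n div 9) else 0)"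
proof -
  have "fps_nth (F oo fps_X ^ 9) n = (\<Sum>i=0..n. fps_nth F i * (if n = 9*i then 1 else 0))"
    by (simp add: fps_compose_nth flip: power_mult)
  also have "\<dots> = (\<Sum>i\<in>{0..n} \<inter> {i. n = 9*i}. fps_nth F i)"
    by (simp add: sum.inter_restrict if_distrib cong: if_cong)
  also have "{0..n} \<inter> {i. n = 9*i} = (if 9 dvd n then {n div 9} else {})"
    by auto
  finally show ?thesis by auto
qed

lemma nine: "card {(t::int,y::int). 9*(P t y) = int n} = (if 9 dvd n then card {(t,y). P t y = int (n div 9)} else 0)"
proof (cases "9 dvd n")
  case True
  then obtain m where "n = 9*m" by blast
  then show ?thesis by simp
next
  case False
  have "{(t::int,y::int). 9*(P t y) = int n} = {}"
  proof (rule ccontr)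
    assume "{(t::int,y::int). 9*(P t y) = int n} \<noteq> {}"
    then obtain t y where "9 * P t y = int n" by auto
    then have "(9::int) dvd int n" by (metis dvd_triv_left)
    then have "9 dvd n" by presburger
    with False show False by simp
  qed
  with False show ?thesis by simp
qed

lemma bij_card:
  fixes Q P :: "int \<Rightarrow> int \<Rightarrow> int" and f g :: "int\<times>int \<Rightarrow> int\<times>int"
  assumes A1: "\<And>x y. P (fst (f (x,y))) (snd (f (x,y))) = Q x y"
  and A2: "\<And>x y. g (f (x,y)) = (x,y)"
  and B: "\<And>u v. P u v = c \<Longrightarrow> \<exists>x y. (u,v) = f (x,y)"
  shows "card {(x,y). Q x y = c} = card {(u,v). P u v = c}"
proof -
  have inj: "inj_on f {(x,y). Q x y = c}"
    by (rule inj_on_inverseI[where g=g]) (auto simp: A2)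
  have "f ` {(x,y). Q x y = c} = {(u,v). P u v = c}"
  proof
    show "f ` {(x,y). Q x y = c} \<subseteq> {(u,v). P u v = c}"
    proof
      fix p assume "p \<in> f ` {(x, y). Q x y = c}"
      then obtain x y where "p = f (x,y)" "Q x y = c" by auto
      then show "p \<in> {(x, y). P x y = c}" using A1[of x y] by (cases p) auto
    qed
    show "{(u,v). P u v = c} \<subseteq> f ` {(x,y). Q x y = c}"
    proof
      fix p assume "p \<in> {(u,v). P u v = c}"
      then obtain u v where p: "p = (u,v)" "P u v = c" by auto
      then obtain x y where e: "(u,v) = f (x,y)" using B by blast
      have "Q x y = c" using A1[of x y] e p by (metis fst_conv snd_conv)
      then show "p \<in> f ` {(x,y). Q x y = c}" using e p by auto
    qed
  qed
  then show ?thesis using card_image[OF inj] by simp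
qed

lemma mQ1:
  fixes x y :: int
  assumes "(1*x^2 + 1*x*y + 52*y^2) mod 3 \<noteq> 1"
  shows "3 dvd (x - y)"
proof -
  have t: "\<And>a b. a\<in>{0,1,2} \<Longrightarrow> b\<in>{0::int,1,2} \<Longrightarrow> (1*a^2 + 1*a*b + 52*b^2) mod 3 \<noteq> 1 \<Longrightarrow> a = b"
    by auto
  have "(x mod 3) = (y mod 3)"
    using t[OF mod3in[of x] mod3in[of y]] assms qmod[of 1 x 1 y 52] by simp
  then show ?thesis by presburger
qed

lemma mQ3:
  fixes x y :: int
  assumes "(4*x^2 + 1*x*y + 13*y^2) mod 3 \<noteq> 1"
  shows "3 dvd (y - x)"
proof -
  have t: "\<And>a b. a\<in>{0,1,2} \<Longrightarrow> b\<in>{0::int,1,2} \<Longrightarrow> (4*a^2 + 1*a*b + 13*b^2) mod 3 \<noteq> 1 \<Longrightarrow> a = b"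
    by auto
  have "(x mod 3) = (y mod 3)"
    using t[OF mod3in[of x] mod3in[of y]] assms qmod[of 4 x 1 y 13] by simp
  then show ?thesis by presburger
qed

lemma mQ2:
  fixes x y :: int
  assumes "(8*x^2 + 7*x*y + 8*y^2) mod 3 \<noteq> 2"
  shows "3 dvd (x + y)"
proof -
  have t: "\<And>a b. a\<in>{0,1,2} \<Longrightarrow> b\<in>{0::int,1,2} \<Longrightarrow> (8*a^2 + 7*a*b + 8*b^2) mod 3 \<noteq> 2 \<Longrightarrow> a + b = 0 \<or> a + b = 3"
    by auto
  have "(x mod 3) + (y mod 3) = 0 \<or> (x mod 3) + (y mod 3) = 3"
    using t[OF mod3in[of x] mod3in[of y]] assms qmod[of 8 x 7 y 8] by simp
  then show ?thesis by presburger
qed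

lemma mQ4:
  fixes x y :: int
  assumes "(2*x^2 + 1*x*y + 26*y^2) mod 3 \<noteq> 2"
  shows "3 dvd (x + y)"
proof -
  have t: "\<And>a b. a\<in>{0,1,2} \<Longrightarrow> b\<in>{0::int,1,2} \<Longrightarrow> (2*a^2 + 1*a*b + 26*b^2) mod 3 \<noteq> 2 \<Longrightarrow> a + b = 0 \<or> a + b = 3"
    by auto
  have "(x mod 3) + (y mod 3) = 0 \<or> (x mod 3) + (y mod 3) = 3"
    using t[OF mod3in[of x] mod3in[of y]] assms qmod[of 2 x 1 y 26] by simp
  then show ?thesis by presburger
qed

lemma m6a:
  fixes x y :: int
  assumes "(1*x^2 + 1*x*y + 6*y^2) mod 3 = 1"
  shows "3 dvd y"
proof -
  have t: "\<And>a b. a\<in>{0,1,2} \<Longrightarrow> b\<in>{0::int,1,2} \<Longrightarrow> (1*a^2 + 1*a*b + 6*b^2) mod 3 = 1 \<Longrightarrow> b = 0"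
    by auto
  have "(y mod 3) = 0"
    using t[OF mod3in[of x] mod3in[of y]] assms qmod[of 1 x 1 y 6] by simp
  then show ?thesis by presburger
qed

lemma m6b:
  fixes x y :: int
  assumes "(1*x^2 + 1*x*y + 6*y^2) mod 3 = 2"
  shows "3 dvd (y - x)"
proof -
  have t: "\<And>a b. a\<in>{0,1,2} \<Longrightarrow> b\<in>{0::int,1,2} \<Longrightarrow> (1*a^2 + 1*a*b + 6*b^2) mod 3 = 2 \<Longrightarrow> a = b"
    by auto
  have "(x mod 3) = (y mod 3)"
    using t[OF mod3in[of x] mod3in[of y]] assms qmod[of 1 x 1 y 6] by simp
  then show ?thesis by presburger
qed

lemma m3a:
  fixes x y :: int
  assumes "(2*x^2 + 1*x*y + 3*y^2) mod 3 = 1"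
  shows "3 dvd (x + y)"
proof -
  have t: "\<And>a b. a\<in>{0,1,2} \<Longrightarrow> b\<in>{0::int,1,2} \<Longrightarrow> (2*a^2 + 1*a*b + 3*b^2) mod 3 = 1 \<Longrightarrow> a + b = 0 \<or> a + b = 3"
    by auto
  have "(x mod 3) + (y mod 3) = 0 \<or> (x mod 3) + (y mod 3) = 3"
    using t[OF mod3in[of x] mod3in[of y]] assms qmod[of 2 x 1 y 3] by simp
  then show ?thesis by presburger
qed

lemma m3b:
  fixes x y :: int
  assumes "(2*x^2 + 1*x*y + 3*y^2) mod 3 = 2"
  shows "3 dvd y"
proof -
  have t: "\<And>a b. a\<in>{0,1,2} \<Longrightarrow> b\<in>{0::int,1,2} \<Longrightarrow> (2*a^2 + 1*a*b + 3*b^2) mod 3 = 2 \<Longrightarrow> b = 0"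
    by auto
  have "(y mod 3) = 0"
    using t[OF mod3in[of x] mod3in[of y]] assms qmod[of 2 x 1 y 3] by simp
  then show ?thesis by presburger
qed

lemma L1a:
  assumes "n mod 3 = 1"
  shows "card {(x::int,y::int). 1*x^2 + 1*x*y + 52*y^2 = int n} = card {(x::int,y::int). 1*x^2 + 1*x*y + 6*y^2 = int n}"
proof (rule bij_card[where f="\<lambda>(x,y). (x-y, 3*y)" and g="\<lambda>(u,v). (u + v div 3, v div 3)"])
  fix u v :: int assume h: "1*u^2 + 1*u*v + 6*v^2 = int n"
  have "(1*u^2 + 1*u*v + 6*v^2) mod 3 = 1" using h assms intmod[of n] by simp
  then have "3 dvd v" by (rule m6a)
  then obtain k where k0: "v = 3*k" by (auto elim!: dvdE)
  have k: "v = 3*k" using k0 by linarith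
  show "\<exists>x y. (u,v) = (\<lambda>(x,y). (x-y, 3*y)) (x,y)"
    by (intro exI[of _ "u+k"] exI[of _ "k"]) (simp add: k algebra_simps)
qed (simp_all add: power2_eq_square algebra_simps div3n)

lemma L1b:
  assumes "n mod 3 \<noteq> 1"
  shows "card {(x::int,y::int). 1*x^2 + 1*x*y + 52*y^2 = int n} = card {(x::int,y::int). 9*(1*x^2 + 1*x*y + 6*y^2) = int n}"
proof -
  have "card {(x::int,y::int). 9*(1*x^2 + 1*x*y + 6*y^2) = int n} = card {(x::int,y::int). 1*x^2 + 1*x*y + 52*y^2 = int n}"
  proof (rule bij_card[where f="\<lambda>(t,y). (y+3*t, y)" and g="\<lambda>(x,y). ((x-y) div 3, y)"])
    fix u v :: int assume h: "1*u^2 + 1*u*v + 52*v^2 = int n"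
    have "(1*u^2 + 1*u*v + 52*v^2) mod 3 \<noteq> 1" using h assms intmod[of n] by simp
    then have "3 dvd (u - v)" by (rule mQ1)
    then obtain k where k0: "u - v = 3*k" by (auto elim!: dvdE)
  have k: "u = v + 3*k" using k0 by linarith
    show "\<exists>x y. (u,v) = (\<lambda>(t,y). (y+3*t, y)) (x,y)"
      by (intro exI[of _ "k"] exI[of _ "v"]) (simp add: k algebra_simps)
  qed (simp_all add: power2_eq_square algebra_simps div3n)
  then show ?thesis by simp
qed

lemma L2a:
  assumes "n mod 3 = 2"
  shows "card {(x::int,y::int). 8*x^2 + 7*x*y + 8*y^2 = int n} = card {(x::int,y::int). 1*x^2 + 1*x*y + 6*y^2 = int n}"
proof (rule bij_card[where f="\<lambda>(x,y). (x-2*y, x+y)" and g="\<lambda>(u,v). ((u+2*v) div 3, (v-u) div 3)"])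
  fix u v :: int assume h: "1*u^2 + 1*u*v + 6*v^2 = int n"
  have "(1*u^2 + 1*u*v + 6*v^2) mod 3 = 2" using h assms intmod[of n] by simp
  then have "3 dvd (v - u)" by (rule m6b)
  then obtain k where k0: "v - u = 3*k" by (auto elim!: dvdE)
  have k: "u = v - 3*k" using k0 by linarith
  show "\<exists>x y. (u,v) = (\<lambda>(x,y). (x-2*y, x+y)) (x,y)"
    by (intro exI[of _ "v-k"] exI[of _ "k"]) (simp add: k algebra_simps)
qed (simp_all add: power2_eq_square algebra_simps div3n)

lemma L2b:
  assumes "n mod 3 \<noteq> 2"
  shows "card {(x::int,y::int). 8*x^2 + 7*x*y + 8*y^2 = int n} = card {(x::int,y::int). 9*(1*x^2 + 1*x*y + 6*y^2) = int n}"
proof -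
  have "card {(x::int,y::int). 9*(1*x^2 + 1*x*y + 6*y^2) = int n} = card {(x::int,y::int). 8*x^2 + 7*x*y + 8*y^2 = int n}"
  proof (rule bij_card[where f="\<lambda>(s,t). (t-s, s+2*t)" and g="\<lambda>(x,y). (y - 2*((x+y) div 3), (x+y) div 3)"])
    fix u v :: int assume h: "8*u^2 + 7*u*v + 8*v^2 = int n"
    have "(8*u^2 + 7*u*v + 8*v^2) mod 3 \<noteq> 2" using h assms intmod[of n] by simp
    then have "3 dvd (u + v)" by (rule mQ2)
    then obtain k where k0: "u + v = 3*k" by (auto elim!: dvdE)
  have k: "u = 3*k - v" using k0 by linarith
    show "\<exists>x y. (u,v) = (\<lambda>(s,t). (t-s, s+2*t)) (x,y)"
      by (intro exI[of _ "v-2*k"] exI[of _ "k"]) (simp add: k algebra_simps)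
  qed (simp_all add: power2_eq_square algebra_simps div3n)
  then show ?thesis by simp
qed

lemma L3a:
  assumes "n mod 3 = 1"
  shows "card {(x::int,y::int). 4*x^2 + 1*x*y + 13*y^2 = int n} = card {(x::int,y::int). 2*x^2 + 1*x*y + 3*y^2 = int n}"
proof (rule bij_card[where f="\<lambda>(x,y). (-x-2*y, x-y)" and g="\<lambda>(u,v). (v - (u+v) div 3, -((u+v) div 3))"])
  fix u v :: int assume h: "2*u^2 + 1*u*v + 3*v^2 = int n"
  have "(2*u^2 + 1*u*v + 3*v^2) mod 3 = 1" using h assms intmod[of n] by simp
  then have "3 dvd (u + v)" by (rule m3a)
  then obtain k where k0: "u + v = 3*k" by (auto elim!: dvdE)
  have k: "u = 3*k - v" using k0 by linarith
  show "\<exists>x y. (u,v) = (\<lambda>(x,y). (-x-2*y, x-y)) (x,y)"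
    by (intro exI[of _ "v-k"] exI[of _ "-k"]) (simp add: k algebra_simps)
qed (simp_all add: power2_eq_square algebra_simps div3n)

lemma L3b:
  assumes "n mod 3 \<noteq> 1"
  shows "card {(x::int,y::int). 4*x^2 + 1*x*y + 13*y^2 = int n} = card {(x::int,y::int). 9*(2*x^2 + 1*x*y + 3*y^2) = int n}"
proof -
  have "card {(x::int,y::int). 9*(2*x^2 + 1*x*y + 3*y^2) = int n} = card {(x::int,y::int). 4*x^2 + 1*x*y + 13*y^2 = int n}"
  proof (rule bij_card[where f="\<lambda>(a,b). (a-2*b, a+b)" and g="\<lambda>(x,y). ((x+2*y) div 3, (y-x) div 3)"])
    fix u v :: int assume h: "4*u^2 + 1*u*v + 13*v^2 = int n"
    have "(4*u^2 + 1*u*v + 13*v^2) mod 3 \<noteq> 1" using h assms intmod[of n] by simp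
    then have "3 dvd (v - u)" by (rule mQ3)
    then obtain k where k0: "v - u = 3*k" by (auto elim!: dvdE)
  have k: "u = v - 3*k" using k0 by linarith
    show "\<exists>x y. (u,v) = (\<lambda>(a,b). (a-2*b, a+b)) (x,y)"
      by (intro exI[of _ "v-k"] exI[of _ "k"]) (simp add: k algebra_simps)
  qed (simp_all add: power2_eq_square algebra_simps div3n)
  then show ?thesis by simp
qed

lemma L4a:
  assumes "n mod 3 = 2"
  shows "card {(x::int,y::int). 2*x^2 + 1*x*y + 26*y^2 = int n} = card {(x::int,y::int). 2*x^2 + 1*x*y + 3*y^2 = int n}"
proof (rule bij_card[where f="\<lambda>(x,y). (x+y, -3*y)" and g="\<lambda>(u,v). (u + v div 3, -(v div 3))"])
  fix u v :: int assume h: "2*u^2 + 1*u*v + 3*v^2 = int n"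
  have "(2*u^2 + 1*u*v + 3*v^2) mod 3 = 2" using h assms intmod[of n] by simp
  then have "3 dvd v" by (rule m3b)
  then obtain k where k0: "v = 3*k" by (auto elim!: dvdE)
  have k: "v = 3*k" using k0 by linarith
  show "\<exists>x y. (u,v) = (\<lambda>(x,y). (x+y, -3*y)) (x,y)"
    by (intro exI[of _ "u+k"] exI[of _ "-k"]) (simp add: k algebra_simps)
qed (simp_all add: power2_eq_square algebra_simps div3n)

lemma L4b:
  assumes "n mod 3 \<noteq> 2"
  shows "card {(x::int,y::int). 2*x^2 + 1*x*y + 26*y^2 = int n} = card {(x::int,y::int). 9*(2*x^2 + 1*x*y + 3*y^2) = int n}"
proof -
  have "card {(x::int,y::int). 9*(2*x^2 + 1*x*y + 3*y^2) = int n} = card {(x::int,y::int). 2*x^2 + 1*x*y + 26*y^2 = int n}"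
  proof (rule bij_card[where f="\<lambda>(t,z). (3*t+z, -z)" and g="\<lambda>(x,y). ((x+y) div 3, -y)"])
    fix u v :: int assume h: "2*u^2 + 1*u*v + 26*v^2 = int n"
    have "(2*u^2 + 1*u*v + 26*v^2) mod 3 \<noteq> 2" using h assms intmod[of n] by simp
    then have "3 dvd (u + v)" by (rule mQ4)
    then obtain k where k0: "u + v = 3*k" by (auto elim!: dvdE)
  have k: "u = 3*k - v" using k0 by linarith
    show "\<exists>x y. (u,v) = (\<lambda>(t,z). (3*t+z, -z)) (x,y)"
      by (intro exI[of _ "k"] exI[of _ "-v"]) (simp add: k algebra_simps)
  qed (simp_all add: power2_eq_square algebra_simps div3n)
  then show ?thesis by simp
qed

lemma I1:
  "qf_theta 1 1 52 = (qf_theta 1 1 6 oo fps_X ^ 9) + P_op 3 1 (qf_theta 1 1 6)"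
proof (rule fps_ext)
  fix n
  show "fps_nth (qf_theta 1 1 52) n = fps_nth ((qf_theta 1 1 6 oo fps_X ^ 9) + P_op 3 1 (qf_theta 1 1 6)) n"
  proof (cases "n mod 3 = 1")
    case True
    have "\<not> 9 dvd n" using True by presburger
    then show ?thesis using L1a[OF True] True by (simp add: qf_theta_def P_op_def comp9)
  next
    case False
    then show ?thesis using L1b[OF False] nine[of "\<lambda>t y. 1*t^2 + 1*t*y + 6*y^2" n]
      by (simp add: qf_theta_def P_op_def comp9)
  qed
qed

lemma I2:
  "qf_theta 8 7 8 = (qf_theta 1 1 6 oo fps_X ^ 9) + P_op 3 2 (qf_theta 1 1 6)"
proof (rule fps_ext)
  fix n
  show "fps_nth (qf_theta 8 7 8) n = fps_nth ((qf_theta 1 1 6 oo fps_X ^ 9) + P_op 3 2 (qf_theta 1 1 6)) n"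
  proof (cases "n mod 3 = 2")
    case True
    have "\<not> 9 dvd n" using True by presburger
    then show ?thesis using L2a[OF True] True by (simp add: qf_theta_def P_op_def comp9)
  next
    case False
    then show ?thesis using L2b[OF False] nine[of "\<lambda>t y. 1*t^2 + 1*t*y + 6*y^2" n]
      by (simp add: qf_theta_def P_op_def comp9)
  qed
qed

lemma I3:
  "qf_theta 4 1 13 = (qf_theta 2 1 3 oo fps_X ^ 9) + P_op 3 1 (qf_theta 2 1 3)"
proof (rule fps_ext)
  fix n
  show "fps_nth (qf_theta 4 1 13) n = fps_nth ((qf_theta 2 1 3 oo fps_X ^ 9) + P_op 3 1 (qf_theta 2 1 3)) n"
  proof (cases "n mod 3 = 1")
    case True
    have "\<not> 9 dvd n" using True by presburger
    then show ?thesis using L3a[OF True] True by (simp add: qf_theta_def P_op_def comp9)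
  next
    case False
    then show ?thesis using L3b[OF False] nine[of "\<lambda>t y. 2*t^2 + 1*t*y + 3*y^2" n]
      by (simp add: qf_theta_def P_op_def comp9)
  qed
qed

lemma I4:
  "qf_theta 2 1 26 = (qf_theta 2 1 3 oo fps_X ^ 9) + P_op 3 2 (qf_theta 2 1 3)"
proof (rule fps_ext)
  fix n
  show "fps_nth (qf_theta 2 1 26) n = fps_nth ((qf_theta 2 1 3 oo fps_X ^ 9) + P_op 3 2 (qf_theta 2 1 3)) n"
  proof (cases "n mod 3 = 2")
    case True
    have "\<not> 9 dvd n" using True by presburger
    then show ?thesis using L4a[OF True] True by (simp add: qf_theta_def P_op_def comp9)
  next
    case False
    then show ?thesis using L4b[OF False] nine[of "\<lambda>t y. 2*t^2 + 1*t*y + 3*y^2" n]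
      by (simp add: qf_theta_def P_op_def comp9)
  qed
qed

theorem mainTheorem6:
  shows "(qf_theta 1 1 52 = (qf_theta 1 1 6 oo fps_X ^ 9) + P_op 3 1 (qf_theta 1 1 6)) \<and>
    (qf_theta 8 7 8 = (qf_theta 1 1 6 oo fps_X ^ 9) + P_op 3 2 (qf_theta 1 1 6)) \<and>
    (qf_theta 4 1 13 = (qf_theta 2 1 3 oo fps_X ^ 9) + P_op 3 1 (qf_theta 2 1 3)) \<and>
    (qf_theta 2 1 26 = (qf_theta 2 1 3 oo fps_X ^ 9) + P_op 3 2 (qf_theta 2 1 3))"
  using I1 I2 I3 I4 by blast

end
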